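(* Let $f$ be an L-additive arithmetic function whose associated completely multiplicative function $h_f$ is nonzero-valued, let $\Lambda_f$ be its generalized von Mangoldt function, and let $g$ be a completely additive arithmetic function. Then for every positive integer $n$, $$(1\ast g\Lambda_f)(n)=\sum_{d\mid n}g(d)\Lambda_f(d)=\frac{1}{2}\sum_{p^{\alpha}\parallel n}\frac{\alpha(\alpha+1)f(p)g(p)}{h_f(p)}.$$
   Context: An arithmetic function $f:\mathbb{N}\to\mathbb{C}$ is L-additive if there is a completely multiplicative function $h_f$ such that $f(mn)=f(m)h_f(n)+f(n)h_f(m)$ for all positive integers $m,n$; such an $h_f$ is fixed. $\Lambda_f(n)=\frac{f(p)}{h_f(p)}$ if $n=p^k$ for some prime $p$ and integer $k\geq1$, and $0$ otherwise. A function $g$ is completely additive if $g(mn)=g(m)+g(n)$ for all positive integers $m,n$. $1$ is the constant function $1$, $\ast$ is Dirichlet convolution, $g\Lambda_f$ is the pointwise product, and $\sum_{p^\alpha\parallel n}$ runs over the primes $p$ dividing $n$ with $\alpha$ the exact exponent of $p$ in $n$. *)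

theory Defs
  imports "HOL-Number_Theory.Number_Theory"
begin

text \<open>Arithmetic functions are modelled as functions on nat; only their values
on positive integers matter.\<close>

definition completely_multiplicative :: "(nat \<Rightarrow> complex) \<Rightarrow> bool" where
  "completely_multiplicative h \<longleftrightarrow> h 1 = 1 \<and> (\<forall>m n. m > 0 \<longrightarrow> n > 0 \<longrightarrow> h (m * n) = h m * h n)"

definition completely_additive :: "(nat \<Rightarrow> complex) \<Rightarrow> bool" where
  "completely_additive g \<longleftrightarrow> (\<forall>m n. m > 0 \<longrightarrow> n > 0 \<longrightarrow> g (m * n) = g m + g n)"

definition L_additive_with :: "(nat \<Rightarrow> complex) \<Rightarrow> (nat \<Rightarrow> complex) \<Rightarrow> bool" where
  "L_additive_with f h \<longleftrightarrow> completely_multiplicative h \<and>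
     (\<forall>m n. m > 0 \<longrightarrow> n > 0 \<longrightarrow> f (m * n) = f m * h n + f n * h m)"

definition gen_mangoldt :: "(nat \<Rightarrow> complex) \<Rightarrow> (nat \<Rightarrow> complex) \<Rightarrow> nat \<Rightarrow> complex" where
  "gen_mangoldt f h n =
     (if \<exists>p k. prime p \<and> k \<ge> 1 \<and> n = p ^ k
      then (let p = (THE p. prime p \<and> (\<exists>k\<ge>1. n = p ^ k)) in f p / h p)
      else 0)"

definition dirichlet_conv :: "(nat \<Rightarrow> complex) \<Rightarrow> (nat \<Rightarrow> complex) \<Rightarrow> nat \<Rightarrow> complex" where
  "dirichlet_conv a b n = (\<Sum>d | d dvd n. a d * b (n div d))"

end

theory Submission
  imports Defs
begin

lemma mang_pp:
  assumes "prime (p::nat)" "k \<ge> 1"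
  shows "gen_mangoldt f h (p ^ k) = f p / h p"
proof -
  have ex: "\<exists>q j. prime q \<and> j \<ge> 1 \<and> p ^ k = q ^ j" using assms by blast
  have th: "(THE q. prime q \<and> (\<exists>j\<ge>1. p ^ k = q ^ j)) = p"
  proof (rule the_equality)
    show "prime p \<and> (\<exists>j\<ge>1. p ^ k = p ^ j)" using assms by blast
  next
    fix q assume "prime q \<and> (\<exists>j\<ge>1. p ^ k = q ^ j)"
    then obtain j where "prime q" "j \<ge> 1" "p ^ k = q ^ j" by blast
    then show "q = p" using prime_power_inj'(1)[of p q k j] assms by simp
  qed
  show ?thesis unfolding gen_mangoldt_def if_P[OF ex] Let_def th ..
qed

lemma mang_0:
  assumes "\<not>(\<exists>p k. prime p \<and> k \<ge> 1 \<and> d = p ^ k)"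
  shows "gen_mangoldt f h d = 0"
  unfolding gen_mangoldt_def by (rule if_not_P[OF assms])

lemma g_pow:
  assumes "completely_additive g" "p > 0"
  shows "g (p ^ k) = of_nat k * g p"
proof (induction k)
  case 0
  have ca: "\<And>m n. m > 0 \<Longrightarrow> n > 0 \<Longrightarrow> g (m * n) = g m + g n"
    using assms(1) unfolding completely_additive_def by blast
  have "g 1 = g 1 + g 1" using ca[of 1 1] by simp
  then show ?case by simp
next
  case (Suc k)
  have ca: "\<And>m n. m > 0 \<Longrightarrow> n > 0 \<Longrightarrow> g (m * n) = g m + g n"
    using assms(1) unfolding completely_additive_def by blast
  have "g (p * p ^ k) = g p + g (p ^ k)" using ca[of p "p ^ k"] assms(2) by simp
  then show ?case using Suc by (simp add: distrib_right)
qed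

lemma two_gauss: "2 * (\<Sum>k=1..a. of_nat k :: complex) = of_nat (a * (a + 1))"
proof (induction a)
  case 0
  then show ?case by simp
next
  case (Suc a)
  have "2 * (\<Sum>k=1..Suc a. of_nat k :: complex) = 2 * (\<Sum>k=1..a. of_nat k) + 2 * of_nat (Suc a)"
    by (simp add: distrib_left)
  also have "\<dots> = of_nat (a * (a + 1) + 2 * Suc a)" using Suc by simp
  also have "a * (a + 1) + 2 * Suc a = Suc a * (Suc a + 1)" by simp
  finally show ?case .
qed

theorem theorem2p3:
  fixes f h g :: "nat \<Rightarrow> complex" and n :: nat
  assumes "L_additive_with f h"
    and "\<And>m. m > 0 \<Longrightarrow> h m \<noteq> 0"
    and "completely_additive g"
    and "n > 0"
  shows "dirichlet_conv (\<lambda>_. 1) (\<lambda>d. g d * gen_mangoldt f h d) n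
           = (\<Sum>d | d dvd n. g d * gen_mangoldt f h d)
       \<and> (\<Sum>d | d dvd n. g d * gen_mangoldt f h d)
           = (1/2) * (\<Sum>p\<in>prime_factors n.
                 of_nat (multiplicity p n * (multiplicity p n + 1)) * f p * g p / h p)"
proof
  let ?F = "\<lambda>d. g d * gen_mangoldt f h d"
  have "dirichlet_conv (\<lambda>_. 1) ?F n = (\<Sum>d | d dvd n. ?F (n div d))"
    unfolding dirichlet_conv_def by simp
  also have "\<dots> = (\<Sum>d | d dvd n. ?F d)"
  proof (rule sum.reindex_bij_witness[of _ "\<lambda>d. n div d" "\<lambda>d. n div d"])
  qed (use assms(4) in \<open>auto simp: dvd_div_eq_mult div_div_eq_right intro: dvd_div_mult_self\<close>)
  finally show "dirichlet_conv (\<lambda>_. 1) ?F n = (\<Sum>d | d dvd n. ?F d)" .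
next
  let ?F = "\<lambda>d. g d * gen_mangoldt f h d"
  let ?m = "\<lambda>p. multiplicity p n"
  define I where "I = Sigma (prime_factors n) (\<lambda>p. {1..?m p})"
  define P where "P = (\<lambda>(p::nat, k::nat). p ^ k)"
  have finI: "finite I" unfolding I_def by auto
  have sub: "P ` I \<subseteq> {d. d dvd n}"
    unfolding I_def P_def by (auto intro: multiplicity_dvd')
  have inj: "inj_on P I"
  proof (rule inj_onI)
    fix a b assume ab: "a \<in> I" "b \<in> I" "P a = P b"
    obtain x y where a: "a = (x, y)" by (cases a)
    obtain xa ya where b: "b = (xa, ya)" by (cases b)
    have "prime x" "prime xa" "1 \<le> y" "1 \<le> ya" "x ^ y = xa ^ ya"
      using ab a b unfolding I_def P_def by (auto intro: in_prime_factors_imp_prime)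
    then show "a = b" using prime_power_inj'[of x xa y ya] a b by simp
  qed
  have zero: "?F d = 0" if "d \<in> {d. d dvd n} - P ` I" for d
  proof (cases "\<exists>p k. prime p \<and> k \<ge> 1 \<and> d = p ^ k")
    case True
    then obtain p k where pk: "prime p" "k \<ge> 1" "d = p ^ k" by blast
    have "p ^ k dvd n" using that pk by auto
    have p1: "p \<noteq> 1" using pk(1) by auto
    have "k \<le> ?m p" using multiplicity_geI[of n p k] \<open>p ^ k dvd n\<close> p1 assms(4) by simp
    moreover have "p dvd p ^ k" using pk(2) by (cases k) auto
    then have "p dvd n" using \<open>p ^ k dvd n\<close> by (rule dvd_trans)
    ultimately have "(p, k) \<in> I" using pk assms(4) unfolding I_def
      by (auto simp: prime_factors_dvd)
    then have "d \<in> P ` I" using pk unfolding P_def by force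
    then show ?thesis using that by blast
  next
    case False
    then show ?thesis by (simp add: mang_0)
  qed
  have "(\<Sum>d | d dvd n. ?F d) = (\<Sum>d \<in> P ` I. ?F d)"
  proof (rule sum.mono_neutral_right)
    show "finite {d. d dvd n}" using assms(4) by simp
  qed (use sub zero in auto)
  also have "\<dots> = (\<Sum>x\<in>I. ?F (P x))" by (rule sum.reindex[OF inj, unfolded comp_def])
  also have "\<dots> = (\<Sum>p\<in>prime_factors n. \<Sum>k\<in>{1..?m p}. ?F (p ^ k))"
    unfolding I_def P_def by (subst sum.Sigma) (auto intro!: sum.cong split: prod.splits)
  also have "\<dots> = (\<Sum>p\<in>prime_factors n. (\<Sum>k=1..?m p. of_nat k) * (g p * f p / h p))"
  proof (rule sum.cong[OF refl])
    fix p assume "p \<in> prime_factors n"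
    then have pp1: "prime p" by (auto intro: in_prime_factors_imp_prime)
    then have pp: "prime p" "p > 0" by (auto simp: prime_gt_0_nat)
    show "(\<Sum>k\<in>{1..?m p}. ?F (p ^ k)) = (\<Sum>k=1..?m p. of_nat k) * (g p * f p / h p)"
      unfolding sum_distrib_right
      by (rule sum.cong[OF refl]) (simp add: mang_pp[OF pp(1)] g_pow[OF assms(3) pp(2)])
  qed
  also have "\<dots> = (1/2) * (\<Sum>p\<in>prime_factors n.
                 of_nat (?m p * (?m p + 1)) * f p * g p / h p)"
    unfolding sum_distrib_left
  proof (rule sum.cong[OF refl])
    fix p
    have "(\<Sum>k=1..?m p. of_nat k) = (1/2) * (of_nat (?m p * (?m p + 1)) :: complex)"
      using two_gauss[of "?m p"] by (simp only: mult.commute[of 2]) (simp add: field_simps)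
    then show "(\<Sum>k=1..?m p. of_nat k) * (g p * f p / h p) =
        1 / 2 * (of_nat (?m p * (?m p + 1)) * f p * g p / h p)"
      unfolding \<open>(\<Sum>k=1..?m p. of_nat k) = (1/2) * (of_nat (?m p * (?m p + 1)) :: complex)\<close>
      by (simp only: times_divide_eq_right times_divide_eq_left divide_divide_eq_left mult_ac)
  qed
  finally show "(\<Sum>d | d dvd n. ?F d) = (1/2) * (\<Sum>p\<in>prime_factors n.
                 of_nat (?m p * (?m p + 1)) * f p * g p / h p)" .
qed

end
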